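(* For $T\ge1$, let $N(T)$ be the number of distinct orbits $o$ in $\mathbb{Z}^2$ with $\operatorname{length}(o)\le T$, and let $S(T)$ be the sum of their lengths. Then: - $N(T)=\frac1{96}T^2+O(T)$; - $S(T)=\frac1{144}T^3+O(T^2)$; - consequently $S(T)/N(T)=\frac23T+O(1)$.
   Context: Define $\mathcal K_1(x_1,x_2)=(-x_1+x_2,x_2)$ and $\mathcal K_2(x_1,x_2)=(x_1,x_1-x_2)$ on $\mathbb{Z}^2$. The orbit $o(\mathbf{x})$ is the set of points obtained from $\mathbf{x}$ by repeated application of $\mathcal K_1,\mathcal K_2$: $(x_1,x_2)$, $(-x_1+x_2,x_2)$, $(-x_1+x_2,-x_1)$, $(-x_2,-x_1)$, $(-x_2,x_1-x_2)$, $(x_1,x_1-x_2)$. Orbits partition $\mathbb{Z}^2$. The orbit length is the Euclidean length of the closed path through the six points in the listed order: $$\operatorname{length}(o(\mathbf{x}))=2\big(|2x_1-x_2|+|x_1+x_2|+|2x_2-x_1|\big).$$ *)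

theory Defs
  imports Complex_Main
begin

definition K1 :: "int \<times> int \<Rightarrow> int \<times> int" where
  "K1 p = (- fst p + snd p, snd p)"

definition K2 :: "int \<times> int \<Rightarrow> int \<times> int" where
  "K2 p = (fst p, fst p - snd p)"

definition Kstep :: "((int \<times> int) \<times> (int \<times> int)) set" where
  "Kstep = {(p, K1 p) | p. True} \<union> {(p, K2 p) | p. True}"

definition orbit :: "int \<times> int \<Rightarrow> (int \<times> int) set" where
  "orbit x = {y. (x, y) \<in> Kstep\<^sup>*}"

text \<open>Length of the closed path through the six orbit points listed from x.\<close>
definition pt_length :: "int \<times> int \<Rightarrow> real" where
  "pt_length p = 2 * (\<bar>2 * fst p - snd p\<bar> + \<bar>fst p + snd p\<bar> + \<bar>2 * snd p - fst p\<bar>)"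

definition orbit_length :: "(int \<times> int) set \<Rightarrow> real" where
  "orbit_length ob = pt_length (SOME x. x \<in> ob)"

definition orbits :: "(int \<times> int) set set" where
  "orbits = range orbit"

definition N_count :: "real \<Rightarrow> nat" where
  "N_count T = card {ob \<in> orbits. orbit_length ob \<le> T}"

definition S_sum :: "real \<Rightarrow> real" where
  "S_sum T = (\<Sum>ob \<in> {ob \<in> orbits. orbit_length ob \<le> T}. orbit_length ob)"

end

theory Submission
  imports Defs
begin

definition P6 :: "int \<times> int \<Rightarrow> (int \<times> int) set" where
  "P6 x = {x, K1 x, K2 (K1 x), K1 (K2 (K1 x)), K2 x, K1 (K2 x)}"

lemma P6_explicit: "P6 (a, b) = {(a,b), (-a+b,b), (-a+b,-a), (-b,-a), (-b,a-b), (a,a-b)}"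
  by (simp add: P6_def K1_def K2_def insert_commute)

lemma P6_closed: "y \<in> P6 x \<Longrightarrow> K1 y \<in> P6 x \<and> K2 y \<in> P6 x"
  by (cases x) (auto simp: P6_explicit K1_def K2_def)

lemma P6_sym: "y \<in> P6 x \<Longrightarrow> x \<in> P6 y"
  by (cases x; cases y) (auto simp: P6_explicit)

lemma st1: "(p, K1 p) \<in> Kstep" unfolding Kstep_def by blast
lemma st2: "(p, K2 p) \<in> Kstep" unfolding Kstep_def by blast
lemma stD: "(y, z) \<in> Kstep \<Longrightarrow> z = K1 y \<or> z = K2 y" unfolding Kstep_def by blast

lemma orbit_sub: "orbit x \<subseteq> P6 x"
proof
  fix y assume "y \<in> orbit x"
  hence "(x, y) \<in> Kstep\<^sup>*" by (simp add: orbit_def)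
  thus "y \<in> P6 x"
  proof (induction rule: rtrancl_induct)
    case base then show ?case by (simp add: P6_def)
  next
    case (step y z) then show ?case using P6_closed stD by metis
  qed
qed

lemma sup_orbit: "P6 x \<subseteq> orbit x"
proof -
  have r1: "(x, K1 x) \<in> Kstep\<^sup>*" using st1 by blast
  have r2: "(x, K2 (K1 x)) \<in> Kstep\<^sup>*" using r1 st2 by (meson rtrancl_into_rtrancl)
  have r3: "(x, K1 (K2 (K1 x))) \<in> Kstep\<^sup>*" using r2 st1 by (meson rtrancl_into_rtrancl)
  have r4: "(x, K2 x) \<in> Kstep\<^sup>*" using st2 by blast
  have r5: "(x, K1 (K2 x)) \<in> Kstep\<^sup>*" using r4 st1 by (meson rtrancl_into_rtrancl)
  show ?thesis using r1 r2 r3 r4 r5 by (auto simp: P6_def orbit_def)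
qed

lemma orbit_P6: "orbit x = P6 x" using orbit_sub sup_orbit by blast

lemma orbit_eq: "y \<in> orbit x \<Longrightarrow> orbit y = orbit x"
proof -
  assume y: "y \<in> orbit x"
  have "orbit y \<subseteq> orbit x" using y by (auto simp: orbit_def)
  moreover have "x \<in> orbit y" using y P6_sym by (simp add: orbit_P6)
  hence "orbit x \<subseteq> orbit y" by (auto simp: orbit_def)
  ultimately show ?thesis by blast
qed

lemma pt_length_inv: "y \<in> P6 x \<Longrightarrow> pt_length y = pt_length x"
  by (cases x) (auto simp: P6_explicit pt_length_def abs_if)

lemma orbit_length_orbit: "orbit_length (orbit x) = pt_length x"
proof -
  have "x \<in> orbit x" by (simp add: orbit_P6 P6_def)
  hence "(SOME y. y \<in> orbit x) \<in> orbit x" by (rule someI)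
  thus ?thesis by (simp add: orbit_length_def orbit_P6 pt_length_inv)
qed

definition D :: "(int \<times> int) set" where
  "D = {x. fst x + snd x \<ge> 0 \<and> 2 * snd x \<le> fst x \<and> snd x < 2 * fst x}"

lemma D_exists: "x \<noteq> (0,0) \<Longrightarrow> \<exists>d\<in>D. d \<in> P6 x"
proof -
  assume "x \<noteq> (0,0)"
  then obtain a b where x: "x = (a,b)" and nz: "a \<noteq> 0 \<or> b \<noteq> 0" by (cases x) auto
  have "(a,b) \<in> D \<or> (-a+b,b) \<in> D \<or> (-a+b,-a) \<in> D \<or> (-b,-a) \<in> D \<or> (-b,a-b) \<in> D \<or> (a,a-b) \<in> D"
    unfolding D_def using nz by simp arith
  thus ?thesis unfolding x P6_explicit by blast
qed

lemma D_unique: "d \<in> D \<Longrightarrow> d' \<in> D \<Longrightarrow> d' \<in> P6 d \<Longrightarrow> d' = d"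
  by (cases d; cases d') (auto simp: P6_explicit D_def)

lemma D_length: "d \<in> D \<Longrightarrow> pt_length d = 4 * (2 * fst d - snd d)"
  by (cases d) (auto simp: D_def pt_length_def abs_if)

lemma zero_notin_D: "(0,0) \<notin> D" by (simp add: D_def)


definition DT :: "real \<Rightarrow> (int \<times> int) set" where
  "DT T = {d \<in> D. pt_length d \<le> T}"

lemma orbit0: "orbit (0,0) = {(0,0)}" by (simp add: orbit_P6 P6_explicit)

lemma filter_eq:
  assumes "T \<ge> 0"
  shows "{ob \<in> orbits. orbit_length ob \<le> T} = insert (orbit (0,0)) (orbit ` DT T)"
proof
  show "{ob \<in> orbits. orbit_length ob \<le> T} \<subseteq> insert (orbit (0,0)) (orbit ` DT T)"
  proof
    fix ob assume "ob \<in> {ob \<in> orbits. orbit_length ob \<le> T}"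
    then obtain x where ob: "ob = orbit x" and le: "pt_length x \<le> T"
      by (auto simp: orbits_def orbit_length_orbit)
    show "ob \<in> insert (orbit (0,0)) (orbit ` DT T)"
    proof (cases "x = (0,0)")
      case True then show ?thesis using ob by simp
    next
      case False
      then obtain d where d: "d \<in> D" "d \<in> P6 x" using D_exists by blast
      have "orbit d = orbit x" using d orbit_eq orbit_P6 by metis
      moreover have "pt_length d = pt_length x" using d pt_length_inv by blast
      ultimately show ?thesis using ob le d by (auto simp: DT_def)
    qed
  qed
next
  show "insert (orbit (0,0)) (orbit ` DT T) \<subseteq> {ob \<in> orbits. orbit_length ob \<le> T}"
    using assms by (auto simp: orbits_def orbit_length_orbit DT_def pt_length_def)
qed

lemma inj_orbit: "inj_on orbit D"
proof (rule inj_onI)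
  fix d d' assume d: "d \<in> D" "d' \<in> D" "orbit d = orbit d'"
  have "d' \<in> orbit d'" by (simp add: orbit_P6 P6_def)
  hence "d' \<in> P6 d" using d by (simp add: orbit_P6)
  thus "d = d'" using D_unique d by metis
qed

lemma zero_notin_img: "orbit (0,0) \<notin> orbit ` DT T"
proof
  assume "orbit (0,0) \<in> orbit ` DT T"
  then obtain d where "d \<in> D" "orbit d = {(0,0)}" by (auto simp: DT_def orbit0)
  moreover have "d \<in> orbit d" by (simp add: orbit_P6 P6_def)
  ultimately show False using zero_notin_D by auto
qed

definition hh :: "nat \<times> int \<Rightarrow> int \<times> int" where
  "hh p = (snd p, 2 * snd p - int (fst p))"

definition FF :: "nat \<Rightarrow> (nat \<times> int) set" where
  "FF R = Sigma {1..R} (\<lambda>m. {(int m + 2) div 3 .. 2 * int m div 3})"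

lemma finite_FF: "finite (FF R)" by (simp add: FF_def)

lemma inj_hh: "inj_on hh (FF R)"
  by (rule inj_onI) (auto simp: hh_def)

lemma DT_eq: "DT T = hh ` FF (nat \<lfloor>T/4\<rfloor>)"
proof
  show "DT T \<subseteq> hh ` FF (nat \<lfloor>T/4\<rfloor>)"
  proof
    fix d assume dT: "d \<in> DT T"
    obtain a b where dd: "d = (a,b)" by (cases d)
    have dD: "a + b \<ge> 0" "2*b \<le> a" "b < 2*a" using dT dd by (auto simp: DT_def D_def)
    have "pt_length d = 4 * (2*a - b)" using dT dd D_length by (auto simp: DT_def)
    hence "4 * real_of_int (2*a - b) \<le> T" using dT by (simp add: DT_def)
    hence "2*a - b \<le> \<lfloor>T/4\<rfloor>" by (simp add: le_floor_iff)
    define m where "m = nat (2*a - b)"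
    have mi: "int m = 2*a - b" using dD m_def by simp
    have "(m, a) \<in> FF (nat \<lfloor>T/4\<rfloor>)" 
    proof -
      have "1 \<le> m" "m \<le> nat \<lfloor>T/4\<rfloor>" using mi \<open>2*a - b \<le> \<lfloor>T/4\<rfloor>\<close> dD by linarith+
      moreover have "(int m + 2) div 3 \<le> a" "a \<le> 2 * int m div 3" using mi dD by presburger+
      ultimately show ?thesis by (simp add: FF_def)
    qed
    moreover have "hh (m, a) = d" using mi dd by (simp add: hh_def)
    ultimately show "d \<in> hh ` FF (nat \<lfloor>T/4\<rfloor>)" by force
  qed
next
  show "hh ` FF (nat \<lfloor>T/4\<rfloor>) \<subseteq> DT T"
  proof
    fix d assume "d \<in> hh ` FF (nat \<lfloor>T/4\<rfloor>)"
    then obtain m a where ma: "1 \<le> m" "m \<le> nat \<lfloor>T/4\<rfloor>" "(int m + 2) div 3 \<le> a" "a \<le> 2 * int m div 3"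
       and d: "d = (a, 2*a - int m)" by (auto simp: FF_def hh_def)
    have "int m \<le> 3*a" using ma(3) by presburger
    moreover have "3*a \<le> 2 * int m" using ma(4) by presburger
    ultimately have dD: "d \<in> D" using ma d unfolding D_def by simp
    have "int m \<le> \<lfloor>T/4\<rfloor>" using ma by linarith
    hence "real m \<le> T/4" by (metis le_floor_iff of_int_of_nat_eq)
    moreover have "pt_length d = 4 * real m" using D_length[OF dD] d by simp
    ultimately show "d \<in> DT T" using dD by (simp add: DT_def)
  qed
qed

definition cc :: "nat \<Rightarrow> real" where
  "cc m = real (card {(int m + 2) div 3 .. 2 * int m div 3})"

lemma N_formula:
  assumes "T \<ge> 0"
  shows "real (N_count T) = 1 + (\<Sum>m=1..nat \<lfloor>T/4\<rfloor>. cc m)"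
proof -
  have fin: "finite (DT T)" using DT_eq finite_FF by simp
  have "N_count T = card (insert (orbit (0,0)) (orbit ` DT T))"
    by (simp add: N_count_def filter_eq[OF assms])
  also have "\<dots> = Suc (card (orbit ` DT T))" using fin zero_notin_img by simp
  also have "card (orbit ` DT T) = card (DT T)"
    by (rule card_image, rule inj_on_subset[OF inj_orbit]) (auto simp: DT_def)
  also have "card (DT T) = card (FF (nat \<lfloor>T/4\<rfloor>))"
    unfolding DT_eq by (rule card_image[OF inj_hh])
  also have "\<dots> = (\<Sum>m=1..nat \<lfloor>T/4\<rfloor>. card {(int m + 2) div 3 .. 2 * int m div 3})"
    unfolding FF_def by (rule card_SigmaI) auto
  finally show ?thesis by (simp add: cc_def)
qed

lemma S_formula:
  assumes "T \<ge> 0"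
  shows "S_sum T = (\<Sum>m=1..nat \<lfloor>T/4\<rfloor>. 4 * real m * cc m)"
proof -
  have fin: "finite (DT T)" using DT_eq finite_FF by simp
  have "S_sum T = (\<Sum>ob\<in>insert (orbit (0,0)) (orbit ` DT T). orbit_length ob)"
    by (simp add: S_sum_def filter_eq[OF assms])
  also have "\<dots> = orbit_length (orbit (0,0)) + (\<Sum>ob\<in>orbit ` DT T. orbit_length ob)"
    using fin zero_notin_img by simp
  also have "orbit_length (orbit (0,0)) = 0" by (simp add: orbit_length_orbit pt_length_def)
  also have "(\<Sum>ob\<in>orbit ` DT T. orbit_length ob) = (\<Sum>d\<in>DT T. pt_length d)"
    by (subst sum.reindex, rule inj_on_subset[OF inj_orbit]) (auto simp: DT_def orbit_length_orbit)
  also have "\<dots> = (\<Sum>p\<in>FF (nat \<lfloor>T/4\<rfloor>). pt_length (hh p))"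
    unfolding DT_eq by (rule sum.reindex[OF inj_hh, unfolded comp_def])
  also have "\<dots> = (\<Sum>p\<in>FF (nat \<lfloor>T/4\<rfloor>). 4 * real (fst p))"
  proof (rule sum.cong)
    fix p assume p: "p \<in> FF (nat \<lfloor>T/4\<rfloor>)"
    have "hh p \<in> DT T" using p DT_eq by blast
    hence "pt_length (hh p) = 4 * (2 * fst (hh p) - snd (hh p))" using D_length by (simp add: DT_def)
    thus "pt_length (hh p) = 4 * real (fst p)" by (simp add: hh_def)
  qed simp
  also have "\<dots> = (\<Sum>m=1..nat \<lfloor>T/4\<rfloor>. \<Sum>a\<in>{(int m + 2) div 3 .. 2 * int m div 3}. 4 * real m)"
    unfolding FF_def by (subst sum.Sigma) (auto simp: case_prod_unfold)
  also have "\<dots> = (\<Sum>m=1..nat \<lfloor>T/4\<rfloor>. 4 * real m * cc m)"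
    by (intro sum.cong refl) (simp add: cc_def)
  finally show ?thesis by simp
qed

lemma cc_bound: "\<bar>cc m - real m / 3\<bar> \<le> 1"
proof -
  define lo where "lo = (int m + 2) div 3"
  define hi where "hi = 2 * int m div 3"
  have a: "3*hi \<le> 2 * int m" "2 * int m \<le> 3*hi + 2" unfolding hi_def by presburger+
  have b: "int m \<le> 3*lo" "3*lo \<le> int m + 2" unfolding lo_def by presburger+
  have k: "hi - lo + 1 \<ge> 0" using a b by linarith
  have "cc m = real_of_int (hi - lo + 1)" unfolding cc_def lo_def[symmetric] hi_def[symmetric]
    using k by simp
  moreover have "real_of_int (3*hi) \<le> 2 * real m" "2 * real m \<le> real_of_int (3*hi) + 2"
      "real m \<le> real_of_int (3*lo)" "real_of_int (3*lo) \<le> real m + 2"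
    using a b by linarith+
  ultimately show ?thesis by (simp add: abs_le_iff)
qed

lemma G1: "(\<Sum>m=1..n. real m) = real n * (real n + 1) / 2"
  by (induction n) (auto simp: field_simps)

lemma G2: "(\<Sum>m=1..n. real m ^ 2) = real n * (real n + 1) * (2 * real n + 1) / 6"
  by (induction n) (auto simp: field_simps power2_eq_square)

lemma G1s: "(\<Sum>m=Suc 0..n. real m) = real n * (real n + 1) / 2" using G1 by simp
lemma G2s: "(\<Sum>m=Suc 0..n. real m ^ 2) = real n * (real n + 1) * (2 * real n + 1) / 6" using G2 by simp

lemma E1: "\<bar>(\<Sum>m=1..n. cc m) - real n * (real n + 1) / 6\<bar> \<le> real n"
proof -
  have "(\<Sum>m=1..n. cc m) - real n * (real n + 1) / 6 = (\<Sum>m=1..n. cc m - real m / 3)"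
    by (simp add: sum_subtractf G1s sum_divide_distrib[symmetric])
  also have "\<bar>\<dots>\<bar> \<le> (\<Sum>m=1..n. \<bar>cc m - real m / 3\<bar>)" by (rule sum_abs)
  also have "\<dots> \<le> (\<Sum>m=1..n. 1)" by (rule sum_mono) (rule cc_bound)
  finally show ?thesis by simp
qed

lemma E2: "\<bar>(\<Sum>m=1..n. 4 * real m * cc m) - 2 / 9 * real n * (real n + 1) * (2 * real n + 1)\<bar>
   \<le> 2 * real n * (real n + 1)"
proof -
  have "(\<Sum>m=1..n. 4 * real m * cc m) - 2 / 9 * real n * (real n + 1) * (2 * real n + 1)
     = (\<Sum>m=1..n. 4 * real m * (cc m - real m / 3))"
  proof -
    have "(\<Sum>m=1..n. 4 * real m * (cc m - real m / 3)) = (\<Sum>m=1..n. 4 * real m * cc m) - (\<Sum>m=1..n. 4/3 * real m ^ 2)"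
      by (simp add: sum_subtractf[symmetric] algebra_simps power2_eq_square)
    also have "(\<Sum>m=1..n. 4/3 * real m ^ 2) = 4/3 * (\<Sum>m=1..n. real m ^ 2)" by (simp add: sum_distrib_left)
    finally show ?thesis by (simp add: G2s)
  qed
  also have "\<bar>\<dots>\<bar> \<le> (\<Sum>m=1..n. \<bar>4 * real m * (cc m - real m / 3)\<bar>)" by (rule sum_abs)
  also have "\<dots> \<le> (\<Sum>m=1..n. 4 * real m)"
  proof (rule sum_mono)
    fix m show "\<bar>4 * real m * (cc m - real m / 3)\<bar> \<le> 4 * real m"
      using cc_bound[of m] by (simp add: abs_mult mult_left_le)
  qed
  also have "\<dots> = 2 * real n * (real n + 1)" by (simp add: sum_distrib_left[symmetric] G1s)
  finally show ?thesis .
qed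



lemma floor_facts:
  assumes T: "T \<ge> 1"
  shows "real (nat \<lfloor>T/4\<rfloor>) \<le> T/4" "T/4 - 1 < real (nat \<lfloor>T/4\<rfloor>)" "0 \<le> real (nat \<lfloor>T/4\<rfloor>)"
proof -
  have "\<lfloor>T/4\<rfloor> \<ge> 0" using T by simp
  hence e: "real (nat \<lfloor>T/4\<rfloor>) = real_of_int \<lfloor>T/4\<rfloor>" by simp
  have z: "0 \<le> real_of_int \<lfloor>T/4\<rfloor>" using \<open>\<lfloor>T/4\<rfloor> \<ge> 0\<close> by simp
  show "real (nat \<lfloor>T/4\<rfloor>) \<le> T/4" "T/4 - 1 < real (nat \<lfloor>T/4\<rfloor>)" "0 \<le> real (nat \<lfloor>T/4\<rfloor>)"
    unfolding e using z by linarith+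
qed

lemma N_bound:
  assumes T: "T \<ge> 1"
  shows "\<bar>real (N_count T) - T^2 / 96\<bar> \<le> 2 * T"
proof -
  define n where "n = nat \<lfloor>T/4\<rfloor>"
  define r where "r = real n"
  define t where "t = T/4"
  have f: "r \<le> t" "t - 1 < r" "0 \<le> r" using floor_facts[OF T] unfolding r_def n_def t_def by auto
  have N: "real (N_count T) = 1 + (\<Sum>m=1..n. cc m)" using N_formula T n_def by simp
  have e1: "\<bar>(\<Sum>m=1..n. cc m) - r * (r + 1) / 6\<bar> \<le> r" using E1 r_def by simp
  have "t*t - r*r = (t - r) * (t + r)" by (simp add: algebra_simps)
  also have "\<dots> \<le> 1 * (t + r)" using f by (intro mult_right_mono) auto
  finally have d1: "t*t - r*r \<le> 2*t" using f by simp
  have d2: "0 \<le> t*t - r*r" using f by (simp add: mult_mono)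
  have TT: "T^2/96 = t*t/6" unfolding t_def by (simp add: power2_eq_square)
  have e1': "\<bar>(\<Sum>m=1..n. cc m) - (r * r) / 6 - r / 6\<bar> \<le> r" using e1 by (simp add: algebra_simps add_divide_distrib)
  have T4: "T = 4 * t" unfolding t_def by simp
  have g: "\<bar>1 + (\<Sum>m=1..n. cc m) - t*t/6\<bar> \<le> 8 * t" using e1' d1 d2 f T4 T by (simp only: abs_le_iff) linarith
  show ?thesis unfolding N TT using g T4 by simp
qed

lemma S_bound:
  assumes T: "T \<ge> 1"
  shows "\<bar>S_sum T - T^3 / 144\<bar> \<le> 2 * T^2"
proof -
  define n where "n = nat \<lfloor>T/4\<rfloor>"
  define r where "r = real n"
  define t where "t = T/4"
  have f: "r \<le> t" "t - 1 < r" "0 \<le> r" using floor_facts[OF T] unfolding r_def n_def t_def by auto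
  have t4: "t \<ge> 1/4" using T t_def by simp
  have S: "S_sum T = (\<Sum>m=1..n. 4 * real m * cc m)" using S_formula T n_def by simp
  have e2: "\<bar>(\<Sum>m=1..n. 4 * real m * cc m) - 2 / 9 * r * (r + 1) * (2 * r + 1)\<bar> \<le> 2 * r * (r + 1)"
    using E2 r_def by simp
  have q1: "t*r \<le> t*t" "r*r \<le> t*t" using f by (auto intro: mult_mono)
  have q: "0 \<le> t*t + t*r + r*r" "t*t + t*r + r*r \<le> 3 * (t*t)" using f q1 by auto
  have "t*t*t - r*r*r = (t - r) * (t*t + t*r + r*r)" by (simp add: algebra_simps)
  also have "\<dots> \<le> 1 * (3 * (t*t))" using f q by (intro mult_mono) auto
  finally have d1: "t*t*t - r*r*r \<le> 3*(t*t)" by simp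
  have d2: "0 \<le> t*t*t - r*r*r" using f q
    by (metis \<open>t*t*t - r*r*r = (t - r) * (t*t + t*r + r*r)\<close> diff_ge_0_iff_ge mult_nonneg_nonneg)
  have rr: "r * r \<le> t * t" "r * (r + 1) \<le> t * (t + 1)" using f by (auto intro: mult_mono)
  have tt: "t \<le> 4 * (t * t)" using t4 by (simp add: mult_mono)
  have TT: "T^3/144 = 4/9 * (t*t*t)" "T^2 = 16 * (t*t)" unfolding t_def by (simp_all add: power3_eq_cube power2_eq_square)
  have expand: "2 / 9 * r * (r + 1) * (2 * r + 1) = 4/9 * (r*r*r) + 2/3 * (r*r) + 2/9 * r"
    by (simp add: algebra_simps)
  have e2': "\<bar>(\<Sum>m=1..n. 4 * real m * cc m) - (4/9 * (r*r*r) + 2/3 * (r*r) + 2/9 * r)\<bar> \<le> 2 * (r * r) + 2 * r"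
    using e2 unfolding expand by (simp add: algebra_simps)
  show ?thesis unfolding S TT using e2' d1 d2 f rr tt q1 t4 by (simp only: abs_le_iff) linarith
qed

lemma ratio_bound:
  fixes N S T :: real
  assumes T: "T \<ge> 1" and N1: "N \<ge> 1" and hN: "\<bar>N - T^2/96\<bar> \<le> 2 * T"
    and hS: "\<bar>S - T^3/144\<bar> \<le> 2 * T^2"
  shows "\<bar>S / N - 2/3 * T\<bar> \<le> 589824"
proof -
  have X: "S - 2/3*T*N = (S - T^3/144) - 2/3*T*(N - T^2/96)" by (simp add: algebra_simps power3_eq_cube power2_eq_square)
  have "\<bar>2/3*T*(N - T^2/96)\<bar> \<le> 2/3*T*(2*T)" using hN T by (simp add: abs_mult mult_left_mono)
  hence Y: "\<bar>S - 2/3*T*N\<bar> \<le> 4 * T^2" unfolding X using hS by (simp add: power2_eq_square)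
  have Z0: "S/N - 2/3*T = (S - 2/3*T*N)/N" using N1 by (simp add: diff_divide_distrib)
  have Z: "\<bar>S / N - 2/3 * T\<bar> = \<bar>S - 2/3*T*N\<bar> / N" using N1
    unfolding Z0 abs_divide by simp
  show ?thesis
  proof (cases "T \<ge> 384")
    case True
    have "2 * T * 384 \<le> 2 * T * T" using True T by (intro mult_left_mono) auto
    hence "N \<ge> T^2/192" using hN by (simp add: power2_eq_square abs_le_iff) 
    hence "\<bar>S - 2/3*T*N\<bar> / N \<le> (4 * T^2) / (T^2/192)" using Y T
      by (intro frac_le) auto
    also have "\<dots> = 768" using T by simp
    finally show ?thesis unfolding Z by simp
  next
    case False
    have "\<bar>S - 2/3*T*N\<bar> / N \<le> \<bar>S - 2/3*T*N\<bar>" using N1 by (simp add: divide_le_eq mult_le_cancel_left1 abs_ge_zero mult_left_le)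
    also have "\<dots> \<le> 4 * T^2" by (rule Y)
    also have "\<dots> \<le> 4 * 384^2" using False T by (intro mult_left_mono power_mono) auto
    finally show ?thesis unfolding Z by simp
  qed
qed

theorem mainTheorem18:
  shows "(\<exists>C. \<forall>T::real. T \<ge> 1 \<longrightarrow> \<bar>real (N_count T) - T^2 / 96\<bar> \<le> C * T)
       \<and> (\<exists>C. \<forall>T::real. T \<ge> 1 \<longrightarrow> \<bar>S_sum T - T^3 / 144\<bar> \<le> C * T^2)
       \<and> (\<exists>C. \<forall>T::real. T \<ge> 1 \<longrightarrow> \<bar>S_sum T / real (N_count T) - 2 / 3 * T\<bar> \<le> C)"
proof (intro conjI)
  show "\<exists>C. \<forall>T::real. T \<ge> 1 \<longrightarrow> \<bar>real (N_count T) - T^2 / 96\<bar> \<le> C * T"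
    using N_bound by blast
  show "\<exists>C. \<forall>T::real. T \<ge> 1 \<longrightarrow> \<bar>S_sum T - T^3 / 144\<bar> \<le> C * T^2"
    using S_bound by blast
  show "\<exists>C. \<forall>T::real. T \<ge> 1 \<longrightarrow> \<bar>S_sum T / real (N_count T) - 2 / 3 * T\<bar> \<le> C"
  proof (intro exI allI impI)
    fix T :: real assume T: "T \<ge> 1"
    have "0 \<le> (\<Sum>m=1..nat \<lfloor>T/4\<rfloor>. cc m)" unfolding cc_def by (rule sum_nonneg) (rule of_nat_0_le_iff)
    hence "real (N_count T) \<ge> 1" using N_formula[of T] T by simp
    thus "\<bar>S_sum T / real (N_count T) - 2 / 3 * T\<bar> \<le> 589824"
      using ratio_bound[OF T _ N_bound[OF T] S_bound[OF T]] by blast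
  qed
qed

end
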